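(* Let $\mathfrak N=\{1,\dots,p\}$ and let $\phi:2^{\mathfrak N}\to\{0,1\}$ be a simple game, i.e. $\phi(\mathfrak N)=1$, $\phi(\emptyset)=0$, and $T\subset S$, $\phi(S)=0$ imply $\phi(T)=0$; let $\mathcal W=\{C\subset\mathfrak N:\phi(C)=1\}$ and define the aggregation function $\delta:\{0,1\}^p\to\{0,1\}$ by $$\delta(x_1,\dots,x_p)=\sum_{C\in\mathcal W}\prod_{k\in C}x_k\prod_{k\notin C}(1-x_k).$$ Let $\Delta$ be the associated set function on events, defined by $\mathbb I_{\Delta(A_1,\dots,A_p)}=\delta(\mathbb I_{A_1},\dots,\mathbb I_{A_p})$. Let $(X_1,\Pi_1)$ be a random element with values in $\mathbb E\times[0,1]^p$ (with $\mathbb E\subset\mathbb R^m$ equipped with its Borel $\sigma$-field $\mathcal B$), defined on a probability space with probability measure $\mathbf P_{x,\pi}$ and expectation $\mathbf E_{x,\pi}$ (the law of the process started from the state $(x,\pi)$); write $\Pi_1^i$ for the $i$-th coordinate of $\Pi_1$. Fix a player $i\in\mathfrak N$ and a real function $g_i$ on $\mathbb E\times[0,1]^p$ such that $g_i(X_1,\Pi_1)$ is integrable. For each $j\neq i$ fix a Borel set $C^j$ and let $D_1^j=\{(X_1,\Pi_1)\in C^j\}$. For an event $A$ put ${}^iD_1(A)=\Delta(D_1^1,\dots,D_1^{i-1},A,D_1^{i+1},\dots,D_1^p)$, and for a Borel set $C^i$ put $D_1^i=\{(X_1,\Pi_1)\in C^i\}$ and $$\psi(C^i)=\mathbf E_{x,\pi}\Big[(1-\Pi_1^i)\,\mathbb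 I_{{}^iD_1(D_1^i)}+g_i(X_1,\Pi_1)\,\mathbb I_{\overline{{}^iD_1(D_1^i)}}\Big].$$ Then the set ${}^{*}C^i=\{(x,\pi):1-\pi_i-g_i(x,\pi)\le 0\}$ satisfies $\psi({}^{*}C^i)=\inf_{C^i}\psi(C^i)$, the infimum taken over all Borel sets $C^i$, and $$\psi({}^{*}C^i)=\mathbf E_{x,\pi}\big(1-\Pi_1^i-g_i(X_1,\Pi_1)\big)^{+}\mathbb I_{{}^iD_1(\emptyset)}-\mathbf E_{x,\pi}\big(1-\Pi_1^i-g_i(X_1,\Pi_1)\big)^{-}\mathbb I_{{}^iD_1(\Omega)}+\mathbf E_{x,\pi}\,g_i(X_1,\Pi_1).$$
   Context: This arises in a distributed disorder detection model: sensor $i$ observes a Markov process $X_n$ and the posterior process $\Pi_n^i=\mathbf P(\theta_i\le n\mid\mathcal F_n)$ of its disorder time $\theta_i$; each sensor's stopping decision at time $1$ is the event $D_1^j$, and the system stops when the aggregated decision $\delta$ of the sensors' votes equals $1$, i.e. on $\Delta(D_1^1,\dots,D_1^p)$. Here $(y)^+=\max(y,0)$, $(y)^-=\max(-y,0)$, $\overline{A}$ denotes the complement of an event $A$, and $\Omega$ is the whole sample space. *)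

theory Defs
  imports "HOL-Probability.Probability"
begin

definition simple_game :: "nat \<Rightarrow> (nat set \<Rightarrow> nat) \<Rightarrow> bool" where
  "simple_game p \<phi> \<longleftrightarrow>
     (\<forall>C. C \<subseteq> {1..p} \<longrightarrow> \<phi> C \<in> {0, 1}) \<and>
     \<phi> {1..p} = 1 \<and> \<phi> {} = 0 \<and>
     (\<forall>S T. S \<subseteq> {1..p} \<longrightarrow> T \<subseteq> S \<longrightarrow> \<phi> S = 0 \<longrightarrow> \<phi> T = 0)"

definition winning :: "nat \<Rightarrow> (nat set \<Rightarrow> nat) \<Rightarrow> nat set set" where
  "winning p \<phi> = {C. C \<subseteq> {1..p} \<and> \<phi> C = 1}"

definition agg_delta :: "nat \<Rightarrow> (nat set \<Rightarrow> nat) \<Rightarrow> (nat \<Rightarrow> real) \<Rightarrow> real" where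
  "agg_delta p \<phi> x =
     (\<Sum>C\<in>winning p \<phi>. (\<Prod>k\<in>C. x k) * (\<Prod>k\<in>{1..p} - C. 1 - x k))"

definition agg_Delta :: "'a measure \<Rightarrow> nat \<Rightarrow> (nat set \<Rightarrow> nat) \<Rightarrow> (nat \<Rightarrow> 'a set) \<Rightarrow> 'a set" where
  "agg_Delta M p \<phi> A =
     {\<omega> \<in> space M. agg_delta p \<phi> (\<lambda>k. indicator (A k) \<omega>) = 1}"

definition iD :: "'a measure \<Rightarrow> nat \<Rightarrow> (nat set \<Rightarrow> nat) \<Rightarrow> (nat \<Rightarrow> 'a set) \<Rightarrow> nat \<Rightarrow> 'a set \<Rightarrow> 'a set" where
  "iD M p \<phi> D i A = agg_Delta M p \<phi> (D(i := A))"

text \<open>State space E x [0,1]^p, embedded in the Borel space of 'e x R^{1..p}.\<close>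
definition state_space :: "nat \<Rightarrow> ('e::euclidean_space \<times> (nat \<Rightarrow> real)) measure" where
  "state_space p = borel \<Otimes>\<^sub>M (PiM {1..p} (\<lambda>k. borel))"

definition XPi :: "nat \<Rightarrow> ('a \<Rightarrow> 'e) \<Rightarrow> (nat \<Rightarrow> 'a \<Rightarrow> real) \<Rightarrow> 'a \<Rightarrow> 'e \<times> (nat \<Rightarrow> real)" where
  "XPi p X Q \<omega> = (X \<omega>, restrict (\<lambda>k. Q k \<omega>) {1..p})"

definition psi ::
  "'a measure \<Rightarrow> nat \<Rightarrow> (nat set \<Rightarrow> nat) \<Rightarrow> ('a \<Rightarrow> 'e) \<Rightarrow> (nat \<Rightarrow> 'a \<Rightarrow> real)
   \<Rightarrow> ('e \<times> (nat \<Rightarrow> real) \<Rightarrow> real) \<Rightarrow> (nat \<Rightarrow> ('e \<times> (nat \<Rightarrow> real)) set) \<Rightarrow> nat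
   \<Rightarrow> ('e \<times> (nat \<Rightarrow> real)) set \<Rightarrow> real" where
  "psi M p \<phi> X Q g Cs i Ci =
     (let D = (\<lambda>j. XPi p X Q -` Cs j \<inter> space M);
          E = iD M p \<phi> D i (XPi p X Q -` Ci \<inter> space M)
      in \<integral>\<omega>. (1 - Q i \<omega>) * indicator E \<omega>
              + g (XPi p X Q \<omega>) * indicator (space M - E) \<omega> \<partial>M)"

end

theory Submission
  imports Defs
begin

lemma finite_winning: "finite (winning p \<phi>)"
  by (rule finite_subset[of _ "Pow {1..p}"]) (auto simp: winning_def)

lemma agg_delta_01:
  assumes x01: "\<And>k. x k = 0 \<or> x k = 1"
  shows "agg_delta p \<phi> x = (if \<phi> {k\<in>{1..p}. x k = 1} = 1 then 1 else 0)"
proof -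
  let ?S = "{k\<in>{1..p}. x k = 1}"
  have trm: "(\<Prod>k\<in>C. x k) * (\<Prod>k\<in>{1..p} - C. 1 - x k) = (if C = ?S then 1 else 0)"
    if "C \<subseteq> {1..p}" for C
  proof (cases "C = ?S")
    case True
    have z: "x k = 0" if k: "k \<in> {1..p} - C" for k
    proof -
      have "k \<notin> ?S" using k True by simp
      then have "\<not> (x k = 1)" using k by simp
      then show ?thesis using x01[of k] by simp
    qed
    have o: "x k = 1" if k: "k \<in> C" for k
    proof -
      have "k \<in> ?S" using k True by simp
      then show ?thesis by simp
    qed
    have "(\<Prod>k\<in>C. x k) = 1" by (rule prod.neutral) (use o in blast)
    moreover have "(\<Prod>k\<in>{1..p} - C. 1 - x k) = 1" by (rule prod.neutral) (use z in simp)
    ultimately show ?thesis using True by simp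
  next
    case False
    then have "\<exists>k. k \<in> C \<and> x k \<noteq> 1 \<or> k \<in> {1..p} - C \<and> x k = 1"
      using that by auto
    then obtain k where k: "k \<in> C \<and> x k \<noteq> 1 \<or> k \<in> {1..p} - C \<and> x k = 1" by blast
    have "x k \<noteq> 1 \<Longrightarrow> x k = 0" using x01[of k] by simp
    then have "k \<in> C \<and> x k = 0 \<or> k \<in> {1..p} - C \<and> x k = 1" using k by blast
    moreover have fin: "finite C" using that finite_subset by blast
    ultimately have "(\<Prod>k\<in>C. x k) * (\<Prod>k\<in>{1..p} - C. 1 - x k) = 0"
      by (elim disjE) (auto intro!: prod_zero)
    then show ?thesis using False by simp
  qed
  have "agg_delta p \<phi> x = (\<Sum>C\<in>winning p \<phi>. (if C = ?S then 1 else 0))"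
    unfolding agg_delta_def by (rule sum.cong[OF refl], rule trm) (simp add: winning_def)
  also have "\<dots> = (if ?S \<in> winning p \<phi> then 1 else 0)"
    using finite_winning by (simp add: sum.delta')
  moreover have "?S \<subseteq> {1..p}" by auto
  ultimately show ?thesis by (simp add: winning_def)
qed

lemma iD_mem:
  "\<omega> \<in> iD M p \<phi> D i A \<longleftrightarrow> \<omega> \<in> space M \<and>
     \<phi> ({j\<in>{1..p}. j \<noteq> i \<and> \<omega> \<in> D j} \<union> (if \<omega> \<in> A \<and> i \<in> {1..p} then {i} else {})) = 1"
proof -
  have "{k\<in>{1..p}. indicator ((D(i := A)) k) \<omega> = (1::real)} =
        {j\<in>{1..p}. j \<noteq> i \<and> \<omega> \<in> D j} \<union> (if \<omega> \<in> A \<and> i \<in> {1..p} then {i} else {})"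
    by (auto simp: indicator_def split: if_splits)
  moreover have "agg_delta p \<phi> (\<lambda>k. indicator ((D(i := A)) k) \<omega>) = (if \<phi> {k\<in>{1..p}. indicator ((D(i := A)) k) \<omega> = (1::real)} = 1 then 1 else 0)"
    by (rule agg_delta_01) (simp add: indicator_def)
  ultimately show ?thesis
    unfolding iD_def agg_Delta_def by simp
qed

lemma agg_delta_meas:
  assumes "\<And>k. k \<in> {1..p} \<Longrightarrow> B k \<in> sets M"
  shows "(\<lambda>\<omega>. agg_delta p \<phi> (\<lambda>k. indicator (B k) \<omega>)) \<in> borel_measurable M"
  unfolding agg_delta_def
  apply (rule borel_measurable_sum)
  apply (rule borel_measurable_times)
   apply (rule borel_measurable_prod)
   apply (use assms in \<open>auto simp: winning_def\<close>)[1]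
  apply (rule borel_measurable_prod)
  apply (rule borel_measurable_diff)
  apply (use assms in \<open>auto simp: winning_def\<close>)
  done

lemma iD_sets:
  assumes "\<And>k. k \<in> {1..p} \<Longrightarrow> k \<noteq> i \<Longrightarrow> D k \<in> sets M" "A \<in> sets M"
  shows "iD M p \<phi> D i A \<in> sets M"
proof -
  have "(\<lambda>\<omega>. agg_delta p \<phi> (\<lambda>k. indicator ((D(i:=A)) k) \<omega>)) \<in> borel_measurable M"
    by (rule agg_delta_meas) (use assms in auto)
  then show ?thesis unfolding iD_def agg_Delta_def by measurable
qed

lemma XPi_meas:
  assumes "X \<in> borel_measurable M" "\<And>k. k \<in> {1..p} \<Longrightarrow> Q k \<in> borel_measurable M"
  shows "XPi p X Q \<in> measurable M (state_space p)"
  unfolding XPi_def state_space_def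
  by (intro measurable_Pair assms measurable_restrict) auto

theorem lemma1:
  fixes M :: "'a measure" and p :: nat and \<phi> :: "nat set \<Rightarrow> nat"
    and X :: "'a \<Rightarrow> 'e::euclidean_space" and Q :: "nat \<Rightarrow> 'a \<Rightarrow> real"
    and g :: "'e \<times> (nat \<Rightarrow> real) \<Rightarrow> real"
    and Cs :: "nat \<Rightarrow> ('e \<times> (nat \<Rightarrow> real)) set" and i :: nat
  assumes "prob_space M"
    and "simple_game p \<phi>"
    and "X \<in> borel_measurable M"
    and "\<And>k. k \<in> {1..p} \<Longrightarrow> Q k \<in> borel_measurable M"
    and "\<And>k \<omega>. k \<in> {1..p} \<Longrightarrow> \<omega> \<in> space M \<Longrightarrow> Q k \<omega> \<in> {0..1}"
    and "i \<in> {1..p}"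
    and "g \<in> borel_measurable (state_space p)"
    and "integrable M (\<lambda>\<omega>. g (XPi p X Q \<omega>))"
    and "\<And>j. j \<in> {1..p} \<Longrightarrow> j \<noteq> i \<Longrightarrow> Cs j \<in> sets (state_space p)"
  shows "psi M p \<phi> X Q g Cs i {z \<in> space (state_space p). 1 - snd z i - g z \<le> 0}
           = (INF C \<in> sets (state_space p). psi M p \<phi> X Q g Cs i C)
       \<and> psi M p \<phi> X Q g Cs i {z \<in> space (state_space p). 1 - snd z i - g z \<le> 0}
           = (let D = (\<lambda>j. XPi p X Q -` Cs j \<inter> space M) in
                (\<integral>\<omega>. max (1 - Q i \<omega> - g (XPi p X Q \<omega>)) 0
                       * indicator (iD M p \<phi> D i {}) \<omega> \<partial>M)
              - (\<integral>\<omega>. max (- (1 - Q i \<omega> - g (XPi p X Q \<omega>))) 0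
                       * indicator (iD M p \<phi> D i (space M)) \<omega> \<partial>M)
              + (\<integral>\<omega>. g (XPi p X Q \<omega>) \<partial>M))"
proof -
  have fm: "finite_measure M" using assms(1) by (rule prob_space.axioms(1))
  define Y where "Y = XPi p X Q"
  define D where "D = (\<lambda>j. Y -` Cs j \<inter> space M)"
  define h where "h = (\<lambda>\<omega>. 1 - Q i \<omega> - g (Y \<omega>))"
  define Cst where "Cst = {z \<in> space (state_space p). 1 - snd z i - g z \<le> 0}"
  define a where "a = iD M p \<phi> D i {}"
  define b where "b = iD M p \<phi> D i (space M)"
  define f where "f = (\<lambda>C \<omega>. (1 - Q i \<omega>) * indicator (iD M p \<phi> D i (Y -` C \<inter> space M)) \<omega>
      + g (Y \<omega>) * indicator (space M - iD M p \<phi> D i (Y -` C \<inter> space M)) \<omega>)"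
  have psi_eq: "\<And>C. psi M p \<phi> X Q g Cs i C = integral\<^sup>L M (f C)"
    by (simp add: psi_def f_def D_def Y_def Let_def)
  have Ymeas: "Y \<in> measurable M (state_space p)"
    unfolding Y_def by (rule XPi_meas) (use assms(3,4) in auto)
  have Dsets: "\<And>j. j\<in>{1..p} \<Longrightarrow> j\<noteq>i \<Longrightarrow> D j \<in> sets M"
    unfolding D_def using measurable_sets[OF Ymeas] assms(9) by blast
  have iDsets: "\<And>A. A \<in> sets M \<Longrightarrow> iD M p \<phi> D i A \<in> sets M"
    by (rule iD_sets) (use Dsets in auto)
  have absets: "a \<in> sets M" "b \<in> sets M" unfolding a_def b_def by (auto intro!: iDsets)
  have Qm: "Q i \<in> borel_measurable M" using assms(4,6) by blast
  have Qint: "integrable M (Q i)"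
    by (rule finite_measure.integrable_const_bound[OF fm, where B=1]) (use assms(5,6) Qm in auto)
  have gint: "integrable M (\<lambda>\<omega>. g (Y \<omega>))" using assms(8) Y_def by simp
  have hint: "integrable M h" unfolding h_def
    by (intro Bochner_Integration.integrable_diff finite_measure.integrable_const[OF fm] Qint gint)
  have hm: "h \<in> borel_measurable M" using hint by (rule borel_measurable_integrable)
  have mem: "\<omega> \<in> iD M p \<phi> D i A \<longleftrightarrow> (if \<omega> \<in> A then \<omega> \<in> b else \<omega> \<in> a)"
    if "\<omega> \<in> space M" "A \<subseteq> space M" for \<omega> A
    using that assms(6) unfolding a_def b_def iD_mem by auto
  have mono: "\<omega> \<in> b" if "\<omega> \<in> a" for \<omega>
  proof -
    let ?S = "{j\<in>{1..p}. j \<noteq> i \<and> \<omega> \<in> D j}"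
    have sp: "\<omega> \<in> space M" and S1: "\<phi> ?S = 1"
      using that assms(6) unfolding a_def iD_mem by auto
    have sub: "?S \<union> {i} \<subseteq> {1..p}" using assms(6) by auto
    have "\<phi> (?S \<union> {i}) = 1"
    proof (rule ccontr)
      assume "\<phi> (?S \<union> {i}) \<noteq> 1"
      then have "\<phi> (?S \<union> {i}) = 0" using assms(2) sub unfolding simple_game_def by blast
      then have "\<phi> ?S = 0" using assms(2) sub unfolding simple_game_def by blast
      then show False using S1 by simp
    qed
    then show ?thesis using sp assms(6) unfolding b_def iD_mem by auto
  qed
  have Yspace: "Y \<omega> \<in> space (state_space p)" if "\<omega> \<in> space M" for \<omega>
    using measurable_space[OF Ymeas that] .
  have sndY: "snd (Y \<omega>) i = Q i \<omega>" for \<omega>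
    using assms(6) by (simp add: Y_def XPi_def)
  have Ystar: "Y -` Cst \<inter> space M = {\<omega>\<in>space M. h \<omega> \<le> 0}"
    using Yspace by (auto simp: Cst_def h_def sndY)
  have Cst_sets: "Cst \<in> sets (state_space p)"
  proof -
    have "(\<lambda>z. snd z i) \<in> borel_measurable (state_space p)"
      unfolding state_space_def
      using assms(6) by measurable
    then show ?thesis unfolding Cst_def using assms(7) by measurable
  qed
  have ind: "indicator (iD M p \<phi> D i (Y -` C \<inter> space M)) \<omega> =
      (if \<omega> \<in> Y -` C then indicator b \<omega> else indicator a \<omega> :: real)"
    if "\<omega> \<in> space M" for C \<omega>
    using mem[OF that, of "Y -` C \<inter> space M"] that by (auto simp: indicator_def)
  have fC: "f C \<omega> = g (Y \<omega>) + h \<omega> * (if \<omega> \<in> Y -` C then indicator b \<omega> else indicator a \<omega>)"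
    if "\<omega> \<in> space M" for C \<omega>
  proof -
    have "indicator (space M - iD M p \<phi> D i (Y -` C \<inter> space M)) \<omega> =
        1 - (indicator (iD M p \<phi> D i (Y -` C \<inter> space M)) \<omega> :: real)"
      using that by (auto simp: indicator_def)
    then have "f C \<omega> = (1 - Q i \<omega>) * indicator (iD M p \<phi> D i (Y -` C \<inter> space M)) \<omega>
      + g (Y \<omega>) * (1 - indicator (iD M p \<phi> D i (Y -` C \<inter> space M)) \<omega>)"
      unfolding f_def by simp
    also have "\<dots> = g (Y \<omega>) + h \<omega> * indicator (iD M p \<phi> D i (Y -` C \<inter> space M)) \<omega>"
      unfolding h_def by (simp add: algebra_simps)
    finally show ?thesis unfolding ind[OF that] .
  qed
  have fstar: "f Cst \<omega> = max (h \<omega>) 0 * indicator a \<omega> - max (- h \<omega>) 0 * indicator b \<omega> + g (Y \<omega>)"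
    if "\<omega> \<in> space M" for \<omega>
  proof -
    have "\<omega> \<in> Y -` Cst \<longleftrightarrow> h \<omega> \<le> 0" using Ystar that by blast
    then show ?thesis unfolding fC[OF that] by (auto simp: max_def)
  qed
  have fle: "f Cst \<omega> \<le> f C \<omega>" if "\<omega> \<in> space M" for C \<omega>
  proof -
    have st: "\<omega> \<in> Y -` Cst \<longleftrightarrow> h \<omega> \<le> 0" using Ystar that by blast
    have ab: "indicator a \<omega> \<le> (indicator b \<omega> :: real)"
      using mono by (auto simp: indicator_def)
    show ?thesis unfolding fC[OF that] st
      using ab by (auto simp: mult_left_mono_neg mult_left_mono)
  qed
  have fint: "integrable M (f C)" if "C \<in> sets (state_space p)" for C
  proof -
    have "Y -` C \<inter> space M \<in> sets M" using measurable_sets[OF Ymeas that] .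
    then have E: "iD M p \<phi> D i (Y -` C \<inter> space M) \<in> sets M" by (rule iDsets)
    show ?thesis unfolding f_def
      by (intro Bochner_Integration.integrable_add integrable_real_mult_indicator
          Bochner_Integration.integrable_diff finite_measure.integrable_const[OF fm] Qint gint E sets.Diff sets.top)
  qed
  have i1: "integrable M (\<lambda>\<omega>. max (h \<omega>) 0 * indicator a \<omega>)"
    by (intro integrable_real_mult_indicator absets integrable_max hint integrable_zero)
  have i2: "integrable M (\<lambda>\<omega>. max (- h \<omega>) 0 * indicator b \<omega>)"
    by (intro integrable_real_mult_indicator absets integrable_max integrable_minus hint integrable_zero)
  have eq2: "integral\<^sup>L M (f Cst) = (\<integral>\<omega>. max (h \<omega>) 0 * indicator a \<omega> \<partial>M)
      - (\<integral>\<omega>. max (- h \<omega>) 0 * indicator b \<omega> \<partial>M) + (\<integral>\<omega>. g (Y \<omega>) \<partial>M)"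
  proof -
    have "integral\<^sup>L M (f Cst) = (\<integral>\<omega>. max (h \<omega>) 0 * indicator a \<omega> - max (- h \<omega>) 0 * indicator b \<omega> + g (Y \<omega>) \<partial>M)"
      by (rule Bochner_Integration.integral_cong) (auto simp: fstar)
    also have "\<dots> = (\<integral>\<omega>. max (h \<omega>) 0 * indicator a \<omega> - max (- h \<omega>) 0 * indicator b \<omega> \<partial>M) + (\<integral>\<omega>. g (Y \<omega>) \<partial>M)"
      by (intro Bochner_Integration.integral_add Bochner_Integration.integrable_diff i1 i2 gint)
    also have "(\<integral>\<omega>. max (h \<omega>) 0 * indicator a \<omega> - max (- h \<omega>) 0 * indicator b \<omega> \<partial>M)
        = (\<integral>\<omega>. max (h \<omega>) 0 * indicator a \<omega> \<partial>M) - (\<integral>\<omega>. max (- h \<omega>) 0 * indicator b \<omega> \<partial>M)"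
      by (intro Bochner_Integration.integral_diff i1 i2)
    finally show ?thesis .
  qed
  have eq1: "integral\<^sup>L M (f Cst) = (INF C \<in> sets (state_space p). integral\<^sup>L M (f C))"
  proof (rule cInf_eq_minimum[symmetric])
    show "integral\<^sup>L M (f Cst) \<in> (\<lambda>C. integral\<^sup>L M (f C)) ` sets (state_space p)"
      using Cst_sets by blast
  next
    fix x assume "x \<in> (\<lambda>C. integral\<^sup>L M (f C)) ` sets (state_space p)"
    then obtain C where C: "C \<in> sets (state_space p)" and x: "x = integral\<^sup>L M (f C)" by blast
    show "integral\<^sup>L M (f Cst) \<le> x" unfolding x
      by (intro integral_mono fint C Cst_sets fle)
  qed
  have G1: "psi M p \<phi> X Q g Cs i {z \<in> space (state_space p). 1 - snd z i - g z \<le> 0}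
           = (INF C \<in> sets (state_space p). psi M p \<phi> X Q g Cs i C)"
    unfolding Cst_def[symmetric] psi_eq by (rule eq1)
  have G2: "psi M p \<phi> X Q g Cs i {z \<in> space (state_space p). 1 - snd z i - g z \<le> 0}
           = (\<integral>\<omega>. max (1 - Q i \<omega> - g (XPi p X Q \<omega>)) 0
                       * indicator (iD M p \<phi> (\<lambda>j. XPi p X Q -` Cs j \<inter> space M) i {}) \<omega> \<partial>M)
              - (\<integral>\<omega>. max (- (1 - Q i \<omega> - g (XPi p X Q \<omega>))) 0
                       * indicator (iD M p \<phi> (\<lambda>j. XPi p X Q -` Cs j \<inter> space M) i (space M)) \<omega> \<partial>M)
              + (\<integral>\<omega>. g (XPi p X Q \<omega>) \<partial>M)"
    unfolding Cst_def[symmetric] psi_eq eq2 unfolding a_def b_def D_def Y_def h_def by (rule refl)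
  show ?thesis
    apply (rule conjI)
     apply (rule G1)
    apply (unfold Let_def)
    apply (rule G2)
    done
qed

thm_deps lemma1

end
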